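(* Property (A) holds if and only if there exists a map $M\colon\mathbb R^n\to\mathbb R^{n\times n}$ such that $f(z)=M(z)\eta(z)$ and $M(z)\preceq 0$ for all $z\in\mathbb R^n$. Moreover, property (A) holds if all of the following hold: - $f$ and $\eta$ are continuously differentiable; - $\eta\colon\mathbb R^n\to\mathbb R^n$ is bijective; - $f(\eta^{-1}(0))=0$; - $D\eta(z)$ is invertible for all $z\in\mathbb R^n$; - $Df(z)\,D\eta(z)^{-1}\preceq 0$ for all $z\in\mathbb R^n$.
   Context: Setting. Let $n,m$ be positive integers. Let $\mathcal H\colon\mathbb R^n\to\mathbb R$ be continuously differentiable with $\mathcal H\ge 0$, and set $\eta\coloneq\nabla\mathcal H\colon\mathbb R^n\to\mathbb R^n$. Let $f\colon\mathbb R^n\to\mathbb R^n$ and $B\colon\mathbb R^n\to\mathbb R^{n\times m}$. Consider the system $\dot z = f(z)+B(z)u$, $y=B(z)^{\mathsf T}\eta(z)$. Notation. For a square matrix $A$ (not necessarily symmetric), $A\preceq 0$ means $x^{\mathsf T}Ax\le 0$ for all $x\in\mathbb R^n$. $Dg(z)$ denotes the Jacobian of $g$ at $z$. Property (A): there exist maps $J,R\colon\mathbb R^n\to\mathbb R^{n\times n}$ such that, for all $z\in\mathbb R^n$, $J(z)=-J(z)^{\mathsf T}$, $R(z)=R(z)^{\mathsf T}$ is positive semidefinite, and $f(z)=(J(z)-R(z))\eta(z)$. *)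

theory Defs
  imports "HOL-Analysis.Analysis"
begin

definition nsd :: "real^'n^'n \<Rightarrow> bool" where
  "nsd A \<longleftrightarrow> (\<forall>x. x \<bullet> (A *v x) \<le> 0)"

definition psd :: "real^'n^'n \<Rightarrow> bool" where
  "psd A \<longleftrightarrow> (\<forall>x. 0 \<le> x \<bullet> (A *v x))"

definition propA :: "(real^'n \<Rightarrow> real^'n) \<Rightarrow> (real^'n \<Rightarrow> real^'n) \<Rightarrow> bool" where
  "propA f \<eta> \<longleftrightarrow> (\<exists>J R :: real^'n \<Rightarrow> real^'n^'n. \<forall>z.
      transpose (J z) = - J z \<and> transpose (R z) = R z \<and> psd (R z) \<and>
      f z = (J z - R z) *v \<eta> z)"

end

theory Submission
  imports Defs
begin

lemma minv_right:
  fixes A :: "real^'n^'n"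
  assumes "invertible A" shows "A ** matrix_inv A = mat 1"
proof -
  have "\<exists>A'. A ** A' = mat 1 \<and> A' ** A = mat 1" using assms by (simp add: invertible_def)
  from someI_ex[OF this] show ?thesis unfolding matrix_inv_def by blast
qed

lemma quad_transpose:
  fixes A :: "real^'n^'n"
  shows "x \<bullet> (transpose A *v x) = x \<bullet> (A *v x)"
  by (metis dot_lmul_matrix inner_commute transpose_matrix_vector)

lemma quad_transpose2:
  fixes A :: "real^'n^'n"
  shows "x \<bullet> (x v* A) = x \<bullet> (A *v x)"
  by (subst inner_commute) (rule dot_lmul_matrix)

lemma smv: "((c::real) *\<^sub>R (A::real^'n^'m)) *v x = c *\<^sub>R (A *v x)"
  by (simp add: scaleR_matrix_vector_assoc)

lemma nmv: "(- (A::real^'n^'m)) *v x = - (A *v x)"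
  by (metis matrix_vector_mult_diff_rdistrib matrix_vector_mult_0 diff_0)

lemma quad_skew:
  fixes J :: "real^'n^'n"
  assumes "transpose J = - J" shows "x \<bullet> (J *v x) = 0"
proof -
  have "x \<bullet> (J *v x) = x \<bullet> ((- J) *v x)" using quad_transpose[of x J] assms by simp
  also have "\<dots> = - (x \<bullet> (J *v x))"
    by (metis inner_minus_right matrix_vector_mult_diff_rdistrib matrix_vector_mult_0 diff_0)
  finally show ?thesis by simp
qed

lemma part1:
  fixes f \<eta> :: "real^'n \<Rightarrow> real^'n"
  shows "propA f \<eta> \<longleftrightarrow> (\<exists>M :: real^'n \<Rightarrow> real^'n^'n. \<forall>z. f z = M z *v \<eta> z \<and> nsd (M z))"
proof
  assume "propA f \<eta>"
  then obtain J R :: "real^'n \<Rightarrow> real^'n^'n" where h: "\<forall>z.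
      transpose (J z) = - J z \<and> transpose (R z) = R z \<and> psd (R z) \<and>
      f z = (J z - R z) *v \<eta> z" unfolding propA_def by blast
  have "\<forall>z. f z = (J z - R z) *v \<eta> z \<and> nsd (J z - R z)"
  proof
    fix z
    have "nsd (J z - R z)" unfolding nsd_def
    proof
      fix x :: "real^'n"
      have "x \<bullet> ((J z - R z) *v x) = x \<bullet> (J z *v x) - x \<bullet> (R z *v x)"
        by (simp add: matrix_vector_mult_diff_rdistrib inner_diff_right)
      moreover have "x \<bullet> (J z *v x) = 0" using quad_skew h by blast
      moreover have "0 \<le> x \<bullet> (R z *v x)" using h psd_def by blast
      ultimately show "x \<bullet> ((J z - R z) *v x) \<le> 0" by simp
    qed
    then show "f z = (J z - R z) *v \<eta> z \<and> nsd (J z - R z)" using h by blast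
  qed
  then show "\<exists>M :: real^'n \<Rightarrow> real^'n^'n. \<forall>z. f z = M z *v \<eta> z \<and> nsd (M z)"
    by (rule exI[of _ "\<lambda>z. J z - R z"])
next
  assume "\<exists>M :: real^'n \<Rightarrow> real^'n^'n. \<forall>z. f z = M z *v \<eta> z \<and> nsd (M z)"
  then obtain M :: "real^'n \<Rightarrow> real^'n^'n" where M: "\<forall>z. f z = M z *v \<eta> z \<and> nsd (M z)" by blast
  define J where "J z = (1/2::real) *\<^sub>R (M z - transpose (M z))" for z
  define R where "R z = (-1/2::real) *\<^sub>R (M z + transpose (M z))" for z
  have "\<forall>z. transpose (J z) = - J z \<and> transpose (R z) = R z \<and> psd (R z) \<and>
      f z = (J z - R z) *v \<eta> z"
  proof
    fix z
    have t1: "transpose (J z) = - J z" unfolding J_def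
      by (simp add: transpose_def vec_eq_iff algebra_simps)
    have t2: "transpose (R z) = R z" unfolding R_def
      by (simp add: transpose_def vec_eq_iff algebra_simps)
    have jr: "J z - R z = M z" unfolding J_def R_def
      by (simp add: vec_eq_iff algebra_simps)
    have "psd (R z)" unfolding psd_def
    proof
      fix x :: "real^'n"
      have "x \<bullet> (R z *v x) = (-1/2) * (x \<bullet> (M z *v x) + x \<bullet> (transpose (M z) *v x))"
        unfolding R_def
        by (simp add: smv nmv matrix_vector_mult_add_rdistrib inner_add_right quad_transpose2)
      also have "\<dots> = - (x \<bullet> (M z *v x))" by (simp add: quad_transpose2)
      finally show "0 \<le> x \<bullet> (R z *v x)" using M nsd_def by fastforce
    qed
    then show "transpose (J z) = - J z \<and> transpose (R z) = R z \<and> psd (R z) \<and>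
      f z = (J z - R z) *v \<eta> z" using t1 t2 jr M by simp
  qed
  then show "propA f \<eta>" unfolding propA_def by blast
qed


lemma exists_nsd:
  fixes w v :: "real^'n"
  assumes "w \<bullet> v \<le> 0" "w = 0 \<Longrightarrow> v = 0"
  shows "\<exists>M :: real^'n^'n. M *v w = v \<and> nsd M"
proof (cases "w = 0")
  case True
  then show ?thesis using assms by (intro exI[of _ 0]) (simp add: nsd_def)
next
  case False
  define a where "a = w \<bullet> w"
  have a: "a > 0" using False by (simp add: a_def)
  define M :: "real^'n^'n" where "M = (\<chi> i j. ((v$i)*(w$j) - (w$i)*(v$j))/a + (w \<bullet> v)*(w$i)*(w$j)/a^2)"
  have Mx: "M *v x = ((w \<bullet> x)/a) *\<^sub>R v - ((v \<bullet> x)/a) *\<^sub>R w + ((w \<bullet> v)*(w \<bullet> x)/a^2) *\<^sub>R w" for x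
    unfolding M_def
  proof (rule iffD2[OF vec_eq_iff], rule allI)
    fix i
    have "(\<Sum>j\<in>UNIV. (((v$i)*(w$j) - (w$i)*(v$j))/a + (w \<bullet> v)*(w$i)*(w$j)/a^2) * x$j)
       = (\<Sum>j\<in>UNIV. (v$i/a) * (w$j * x$j) - (w$i/a) * (v$j*x$j) + ((w \<bullet> v)*(w$i)/a^2) * (w$j*x$j))"
      by (rule sum.cong) (auto simp: algebra_simps diff_divide_distrib)
    also have "\<dots> = (v$i/a) * (w \<bullet> x) - (w$i/a) * (v \<bullet> x) + ((w \<bullet> v)*(w$i)/a^2) * (w \<bullet> x)"
      by (simp only: sum.distrib sum_subtractf sum_distrib_left[symmetric] inner_vec_def inner_real_def)
    finally show "((\<chi> i j. ((v$i)*(w$j) - (w$i)*(v$j))/a + (w \<bullet> v)*(w$i)*(w$j)/a^2) *v x) $ i = (((w \<bullet> x)/a) *\<^sub>R v - ((v \<bullet> x)/a) *\<^sub>R w + ((w \<bullet> v)*(w \<bullet> x)/a^2) *\<^sub>R w) $ i"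
      by (simp add: matrix_vector_mult_def algebra_simps)
  qed
  have "M *v w = v" using a by (simp add: Mx a_def[symmetric] inner_commute power2_eq_square)
  moreover have "nsd M" unfolding nsd_def
  proof
    fix x :: "real^'n"
    have "x \<bullet> (M *v x) = (w \<bullet> v) * (w \<bullet> x)^2 / a^2"
      by (simp add: Mx inner_diff_right inner_add_right inner_commute power2_eq_square)
    also have "\<dots> \<le> 0" using assms(1) by (intro divide_nonpos_nonneg mult_nonpos_nonneg) auto
    finally show "x \<bullet> (M *v x) \<le> 0" .
  qed
  ultimately show ?thesis by blast
qed

lemma part2:
  fixes \<eta> f :: "real^'n \<Rightarrow> real^'n" and Df D\<eta> :: "real^'n \<Rightarrow> real^'n^'n"
  assumes df: "\<forall>z. (f has_derivative (\<lambda>v. Df z *v v)) (at z)"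
    and de: "\<forall>z. (\<eta> has_derivative (\<lambda>v. D\<eta> z *v v)) (at z)"
    and bij: "bij \<eta>" and f0: "f (inv \<eta> 0) = 0"
    and inv: "\<forall>z. invertible (D\<eta> z)"
    and ns: "\<forall>z. nsd (Df z ** matrix_inv (D\<eta> z))"
  shows "propA f \<eta>"
proof -
  define gi where "gi = inv \<eta>"
  have gi1: "gi (\<eta> z) = z" for z using bij unfolding gi_def by (simp add: bij_is_inj)
  have gi2: "\<eta> (gi w) = w" for w using bij unfolding gi_def by (simp add: bij_is_surj surj_f_inv_f)
  have cont: "continuous_on UNIV \<eta>"
    using de by (intro continuous_at_imp_continuous_on) (blast intro: has_derivative_continuous)
  have dgi: "(gi has_derivative (\<lambda>v. matrix_inv (D\<eta> (gi w)) *v v)) (at w)" for w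
  proof -
    have "(gi has_derivative (\<lambda>v. matrix_inv (D\<eta> (gi w)) *v v)) (at (\<eta> (gi w)))"
    proof (rule has_derivative_inverse_strong[of UNIV "gi w" \<eta> gi])
      show "(\<eta> has_derivative (\<lambda>v. D\<eta> (gi w) *v v)) (at (gi w))" using de by blast
      show "(\<lambda>v. D\<eta> (gi w) *v v) \<circ> (\<lambda>v. matrix_inv (D\<eta> (gi w)) *v v) = id"
        using minv_right[OF inv[rule_format]] by (simp add: fun_eq_iff matrix_vector_mul_assoc)
    qed (use cont gi1 in auto)
    then show ?thesis by (simp add: gi2)
  qed
  have key: "w \<bullet> f (gi w) \<le> 0" for w
  proof -
    define \<phi> where "\<phi> t = w \<bullet> f (gi (t *\<^sub>R w))" for t :: real
    have "\<phi> 1 \<le> \<phi> 0"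
    proof (rule DERIV_nonpos_imp_nonincreasing[of 0 1 \<phi>])
      fix t :: real
      define y where "y = gi (t *\<^sub>R w)"
      define D where "D = w \<bullet> ((Df y ** matrix_inv (D\<eta> y)) *v w)"
      have "((\<lambda>t. t *\<^sub>R w) has_derivative (\<lambda>s. s *\<^sub>R w)) (at t)"
        by (intro derivative_eq_intros) auto
      from has_derivative_compose[OF this dgi]
      have "((\<lambda>t. gi (t *\<^sub>R w)) has_derivative (\<lambda>s. matrix_inv (D\<eta> y) *v (s *\<^sub>R w))) (at t)"
        by (simp add: y_def)
      from has_derivative_compose[OF this df[rule_format, of "gi (t *\<^sub>R w)"]]
      have "((\<lambda>t. f (gi (t *\<^sub>R w))) has_derivative (\<lambda>s. Df y *v (matrix_inv (D\<eta> y) *v (s *\<^sub>R w)))) (at t)"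
        by (simp add: y_def)
      from has_derivative_inner_right[OF this, of w]
      have "(\<phi> has_derivative (\<lambda>s. w \<bullet> (Df y *v (matrix_inv (D\<eta> y) *v (s *\<^sub>R w))))) (at t)"
        by (simp add: \<phi>_def[abs_def])
      moreover have "(\<lambda>s. w \<bullet> (Df y *v (matrix_inv (D\<eta> y) *v (s *\<^sub>R w)))) = (*) D"
        by (simp add: fun_eq_iff D_def matrix_vector_mul_assoc matrix_vector_mult_scaleR)
      ultimately have "DERIV \<phi> t :> D" by (simp add: has_field_derivative_def)
      moreover have "D \<le> 0" using ns unfolding nsd_def D_def by blast
      ultimately show "\<exists>D. DERIV \<phi> t :> D \<and> D \<le> 0" by blast
    qed simp
    moreover have "\<phi> 0 = 0" using f0 by (simp add: \<phi>_def gi_def)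
    moreover have "\<phi> 1 = w \<bullet> f (gi w)" by (simp add: \<phi>_def)
    ultimately show ?thesis by simp
  qed
  have "\<forall>z. \<exists>M :: real^'n^'n. M *v \<eta> z = f z \<and> nsd M"
  proof
    fix z
    show "\<exists>M :: real^'n^'n. M *v \<eta> z = f z \<and> nsd M"
    proof (rule exists_nsd)
      show "\<eta> z \<bullet> f z \<le> 0" using key[of "\<eta> z"] by (simp add: gi1)
      show "f z = 0" if "\<eta> z = 0"
        using f0 gi1[of z] that by (simp add: gi_def)
    qed
  qed
  then obtain M :: "real^'n \<Rightarrow> real^'n^'n" where "\<forall>z. M z *v \<eta> z = f z \<and> nsd (M z)"
    by metis
  then show ?thesis using part1[of f \<eta>] by metis
qed

theorem mainTheorem3:
  fixes H :: "real^'n \<Rightarrow> real" and \<eta> f :: "real^'n \<Rightarrow> real^'n"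
  assumes H_nonneg: "\<forall>z. 0 \<le> H z"
    and H_grad: "\<forall>z. (H has_derivative (\<lambda>v. \<eta> z \<bullet> v)) (at z)"
    and H_C1: "continuous_on UNIV \<eta>"
  shows "(propA f \<eta> \<longleftrightarrow>
           (\<exists>M :: real^'n \<Rightarrow> real^'n^'n. \<forall>z. f z = M z *v \<eta> z \<and> nsd (M z)))
       \<and> (\<forall>(Df :: real^'n \<Rightarrow> real^'n^'n) (D\<eta> :: real^'n \<Rightarrow> real^'n^'n).
            (\<forall>z. (f has_derivative (\<lambda>v. Df z *v v)) (at z)) \<and> continuous_on UNIV Df \<and>
            (\<forall>z. (\<eta> has_derivative (\<lambda>v. D\<eta> z *v v)) (at z)) \<and> continuous_on UNIV D\<eta> \<and>
            bij \<eta> \<and> f (inv \<eta> 0) = 0 \<and>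
            (\<forall>z. invertible (D\<eta> z)) \<and>
            (\<forall>z. nsd (Df z ** matrix_inv (D\<eta> z)))
          \<longrightarrow> propA f \<eta>)"
  using part1[of f \<eta>] part2[of f _ \<eta>] by blast

end
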